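(* Let $c^{(k)}$ be an admissible control, $\rho^{(k)}$ the corresponding solution of the master equation and $\chi^{(k)}$ the solution of the adjoint system with control $c^{(k)}$. Let $c^{(k+1)}=(u^{(k+1)},n_1^{(k+1)},n_2^{(k+1)})$ be an admissible control and $\rho^{(k+1)}$ the solution of the master equation with control $c^{(k+1)}$ such that for every $t\in[0,T]$: $u^{(k+1)}(t)\in\arg\max_{|u|\le\mu}\mathcal K^u(\chi^{(k)}(t),\rho^{(k+1)}(t))\,u$ and $n_j^{(k+1)}(t)\in\arg\max_{n_j\in[0,n_{\max}]}\mathcal K^{n_j}(\chi^{(k)}(t),\rho^{(k+1)}(t))\,n_j$, $j=1,2$ (i.e. $u^{(k+1)}(t)=\pm\mu$ according to the sign of $\mathcal K^u$, $n_j^{(k+1)}(t)=0$ or $n_{\max}$ according to the sign of $\mathcal K^{n_j}$, arbitrary in the admissible range where the switching function vanishes). Then $\langle\mathcal K^c(\chi^{(k)}(t),\rho^{(k+1)}(t)),c^{(k+1)}(t)-c^{(k)}(t)\rangle\ge0$ for all $t\in[0,T]$ and $J_1(c^{(k+1)})\ge J_1(c^{(k)})$. Moreover $J_1(c^{(k+1)})>J_1(c^{(k)})$ if at least one of the sets $\{t: u^{(k+1)}(t)\ne u^{(k)}(t),\ \mathcal K^u(\chi^{(k)}(t),\rho^{(k+1)}(t))\ne0\}$, $\{t: n_j^{(k+1)}(t)\ne n_j^{(k)}(t),\ \mathcal K^{n_j}(\chi^{(k)}(t),\rho^{(k+1)}(t))\ne0\}$ ($j=1,2$) has positive Lebesgue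 measure.
   Context: Let $\sigma_x,\sigma_y,\sigma_z$ be the Pauli matrices, $\mathbb I_2,\mathbb I_4$ identity matrices, $\sigma^+=\begin{pmatrix}0&0\\1&0\end{pmatrix}$, $\sigma^-=\begin{pmatrix}0&1\\0&0\end{pmatrix}$, $\sigma_1^\pm=\sigma^\pm\otimes\mathbb I_2$, $\sigma_2^\pm=\mathbb I_2\otimes\sigma^\pm$, $W_1=\sigma_z\otimes\mathbb I_2$, $W_2=\mathbb I_2\otimes\sigma_z$. Fix parameters $\varepsilon,\omega_j,\Lambda_j,\Omega_j>0$ ($j=1,2$), $H_0=\frac{\omega_1}{2}W_1+\frac{\omega_2}{2}W_2$, and a Hermitian $4\times4$ matrix $V$ (in the paper $V=Q_1\otimes\mathbb I_2+\mathbb I_2\otimes Q_2$ or $V=Q_1\otimes Q_2$ with $Q_j=\sin\theta_j\cos\varphi_j\sigma_x+\sin\theta_j\sin\varphi_j\sigma_y+\cos\theta_j\sigma_z$). For $c=(u,n_1,n_2)\in\mathbb R^3$ let $H_c=H_0+\varepsilon\sum_{j=1}^2\Lambda_j n_jW_j+uV$ and $$\mathcal L^D_n(\rho)=\sum_{j=1}^2\Big[\Omega_j(n_j+1)\big(2\sigma_j^-\rho\sigma_j^+-\{\sigma_j^+\sigma_j^-,\rho\}\big)+\Omega_jn_j\big(2\sigma_j^+\rho\sigma_j^--\{\sigma_j^-\sigma_j^+,\rho\}\big)\Big],$$ $$\mathcal L^{D,\dagger}_n(\chi)=\sum_{j=1}^2\Big[\Omega_j(n_j+1)\big(2\sigma_j^+\chi\sigma_j^--\{\sigma_j^+\sigma_j^-,\chi\}\big)+\Omega_jn_j\big(2\sigma_j^-\chi\sigma_j^+-\{\sigma_j^-\sigma_j^+,\chi\}\big)\Big],$$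 where $\{A,B\}=AB+BA$, $[A,B]=AB-BA$. Fix $T>0$, $\mu,n_{\max}>0$, $Q=[-\mu,\mu]\times[0,n_{\max}]^2$; admissible controls are piecewise continuous $c=(u,n_1,n_2):[0,T]\to Q$. Fix density matrices $\rho_0,\rho_{\rm target}$ ($4\times 4$, positive semidefinite, trace one). The master equation is $\dot\rho(t)=-i[H_{c(t)},\rho(t)]+\varepsilon\mathcal L^D_{n(t)}(\rho(t))$, $\rho(0)=\rho_0$; the adjoint system is $\dot\chi(t)=-i[H_{c(t)},\chi(t)]-\varepsilon\mathcal L^{D,\dagger}_{n(t)}(\chi(t))$, $\chi(T)=\rho_{\rm target}$ (solved backward). For matrices, $\langle A,B\rangle={\rm Tr}(A^\dagger B)$. The objective is $J_1(c)={\rm Tr}(\rho(T)\rho_{\rm target})$ where $\rho$ solves the master equation with control $c$. The switching functions $\mathcal K^c=(\mathcal K^u,\mathcal K^{n_1},\mathcal K^{n_2})$ are the coefficients of $u,n_1,n_2$ in $\langle\chi,-i[H_c,\rho]+\varepsilon\mathcal L^D_n(\rho)\rangle$: $\mathcal K^u(\chi,\rho)=\langle\chi,-i[V,\rho]\rangle$, $\mathcal K^{n_j}(\chi,\rho)=\big\langle\chi,-i\varepsilon\Lambda_j[W_j,\rho]+\varepsilon\Omega_j\big(2\sigma_j^-\rho\sigma_j^++2\sigma_j^+\rho\sigma_j^--2\rho\big)\big\rangle$, $j=1,2$ (real for Hermitian $\chi,\rho$). *)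

theory Defs
  imports "HOL-Analysis.Analysis"
begin

type_synonym mat2 = "complex^2^2"
text \<open>4x4 matrices, indexed by pairs (tensor product index of C^2 (x) C^2).\<close>
type_synonym mat4 = "complex^(2 \<times> 2)^(2 \<times> 2)"

definition mat2_of :: "complex \<Rightarrow> complex \<Rightarrow> complex \<Rightarrow> complex \<Rightarrow> mat2" where
  "mat2_of a b c d = vector [vector [a, b], vector [c, d]]"

definition sigma_x :: mat2 where "sigma_x = mat2_of 0 1 1 0"
definition sigma_y :: mat2 where "sigma_y = mat2_of 0 (-\<i>) \<i> 0"
definition sigma_z :: mat2 where "sigma_z = mat2_of 1 0 0 (-1)"
definition sigma_plus :: mat2 where "sigma_plus = mat2_of 0 0 1 0"
definition sigma_minus :: mat2 where "sigma_minus = mat2_of 0 1 0 0"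

definition kron :: "mat2 \<Rightarrow> mat2 \<Rightarrow> mat4" where
  "kron A B = (\<chi> p q. A $ fst p $ fst q * B $ snd p $ snd q)"

definition I2 :: mat2 where "I2 = mat 1"

definition sigma_p :: "nat \<Rightarrow> mat4" where
  "sigma_p j = (if j = 1 then kron sigma_plus I2 else kron I2 sigma_plus)"
definition sigma_m :: "nat \<Rightarrow> mat4" where
  "sigma_m j = (if j = 1 then kron sigma_minus I2 else kron I2 sigma_minus)"
definition W :: "nat \<Rightarrow> mat4" where
  "W j = (if j = 1 then kron sigma_z I2 else kron I2 sigma_z)"

definition csmul :: "complex \<Rightarrow> mat4 \<Rightarrow> mat4" where
  "csmul c A = (\<chi> i j. c * A $ i $ j)"
definition adj :: "mat4 \<Rightarrow> mat4" where
  "adj A = (\<chi> i j. cnj (A $ j $ i))"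
definition comm :: "mat4 \<Rightarrow> mat4 \<Rightarrow> mat4" where
  "comm A B = A ** B - B ** A"
definition acomm :: "mat4 \<Rightarrow> mat4 \<Rightarrow> mat4" where
  "acomm A B = A ** B + B ** A"

definition hs_inner :: "mat4 \<Rightarrow> mat4 \<Rightarrow> complex" where
  "hs_inner A B = trace (adj A ** B)"

definition hermitian :: "mat4 \<Rightarrow> bool" where
  "hermitian A \<longleftrightarrow> adj A = A"

definition psd :: "mat4 \<Rightarrow> bool" where
  "psd A \<longleftrightarrow> hermitian A \<and>
     (\<forall>x :: complex^(2\<times>2). 0 \<le> Re (\<Sum>i\<in>UNIV. \<Sum>j\<in>UNIV. cnj (x $ i) * A $ i $ j * x $ j))"

definition density_matrix :: "mat4 \<Rightarrow> bool" where
  "density_matrix A \<longleftrightarrow> psd A \<and> trace A = 1"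

text \<open>Controls are triples c = (u, n_1, n_2). Parameters omega, Lambda, Omega are
  indexed by j \<in> {1,2}.\<close>

definition H0 :: "(nat \<Rightarrow> real) \<Rightarrow> mat4" where
  "H0 \<omega> = (\<omega> 1 / 2) *\<^sub>R W 1 + (\<omega> 2 / 2) *\<^sub>R W 2"

definition Hc :: "real \<Rightarrow> (nat \<Rightarrow> real) \<Rightarrow> (nat \<Rightarrow> real) \<Rightarrow> mat4 \<Rightarrow> real \<times> real \<times> real \<Rightarrow> mat4" where
  "Hc \<epsilon> \<omega> \<Lambda> V c = (case c of (u, n1, n2) \<Rightarrow>
      H0 \<omega> + \<epsilon> *\<^sub>R ((\<Lambda> 1 * n1) *\<^sub>R W 1 + (\<Lambda> 2 * n2) *\<^sub>R W 2) + u *\<^sub>R V)"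

definition LD_j :: "(nat \<Rightarrow> real) \<Rightarrow> nat \<Rightarrow> real \<Rightarrow> mat4 \<Rightarrow> mat4" where
  "LD_j \<Omega> j n \<rho> =
     (\<Omega> j * (n + 1)) *\<^sub>R (2 *\<^sub>R (sigma_m j ** \<rho> ** sigma_p j) - acomm (sigma_p j ** sigma_m j) \<rho>)
   + (\<Omega> j * n) *\<^sub>R (2 *\<^sub>R (sigma_p j ** \<rho> ** sigma_m j) - acomm (sigma_m j ** sigma_p j) \<rho>)"

definition LD :: "(nat \<Rightarrow> real) \<Rightarrow> real \<times> real \<times> real \<Rightarrow> mat4 \<Rightarrow> mat4" where
  "LD \<Omega> c \<rho> = (case c of (u, n1, n2) \<Rightarrow> LD_j \<Omega> 1 n1 \<rho> + LD_j \<Omega> 2 n2 \<rho>)"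

definition LD_adj_j :: "(nat \<Rightarrow> real) \<Rightarrow> nat \<Rightarrow> real \<Rightarrow> mat4 \<Rightarrow> mat4" where
  "LD_adj_j \<Omega> j n X =
     (\<Omega> j * (n + 1)) *\<^sub>R (2 *\<^sub>R (sigma_p j ** X ** sigma_m j) - acomm (sigma_p j ** sigma_m j) X)
   + (\<Omega> j * n) *\<^sub>R (2 *\<^sub>R (sigma_m j ** X ** sigma_p j) - acomm (sigma_m j ** sigma_p j) X)"

definition LD_adj :: "(nat \<Rightarrow> real) \<Rightarrow> real \<times> real \<times> real \<Rightarrow> mat4 \<Rightarrow> mat4" where
  "LD_adj \<Omega> c X = (case c of (u, n1, n2) \<Rightarrow> LD_adj_j \<Omega> 1 n1 X + LD_adj_j \<Omega> 2 n2 X)"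

definition master_rhs ::
  "real \<Rightarrow> (nat \<Rightarrow> real) \<Rightarrow> (nat \<Rightarrow> real) \<Rightarrow> (nat \<Rightarrow> real) \<Rightarrow> mat4 \<Rightarrow> real \<times> real \<times> real \<Rightarrow> mat4 \<Rightarrow> mat4" where
  "master_rhs \<epsilon> \<omega> \<Lambda> \<Omega> V c \<rho> = csmul (-\<i>) (comm (Hc \<epsilon> \<omega> \<Lambda> V c) \<rho>) + \<epsilon> *\<^sub>R LD \<Omega> c \<rho>"

definition adjoint_rhs ::
  "real \<Rightarrow> (nat \<Rightarrow> real) \<Rightarrow> (nat \<Rightarrow> real) \<Rightarrow> (nat \<Rightarrow> real) \<Rightarrow> mat4 \<Rightarrow> real \<times> real \<times> real \<Rightarrow> mat4 \<Rightarrow> mat4" where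
  "adjoint_rhs \<epsilon> \<omega> \<Lambda> \<Omega> V c X = csmul (-\<i>) (comm (Hc \<epsilon> \<omega> \<Lambda> V c) X) - \<epsilon> *\<^sub>R LD_adj \<Omega> c X"

definition piecewise_continuous_on :: "real \<Rightarrow> real \<Rightarrow> (real \<Rightarrow> 'a::topological_space) \<Rightarrow> bool" where
  "piecewise_continuous_on a b f \<longleftrightarrow>
     (\<exists>S. finite S \<and> continuous_on ({a..b} - S) f \<and>
        (\<forall>s\<in>S. (a < s \<longrightarrow> (\<exists>l. (f \<longlongrightarrow> l) (at_left s))) \<and>
                (s < b \<longrightarrow> (\<exists>l. (f \<longlongrightarrow> l) (at_right s)))))"

definition control_set :: "real \<Rightarrow> real \<Rightarrow> (real \<times> real \<times> real) set" where
  "control_set \<mu> nmax = {-\<mu>..\<mu>} \<times> {0..nmax} \<times> {0..nmax}"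

definition admissible :: "real \<Rightarrow> real \<Rightarrow> real \<Rightarrow> (real \<Rightarrow> real \<times> real \<times> real) \<Rightarrow> bool" where
  "admissible T \<mu> nmax c \<longleftrightarrow>
     piecewise_continuous_on 0 T c \<and> (\<forall>t\<in>{0..T}. c t \<in> control_set \<mu> nmax)"

text \<open>(Carath\'eodory) solution on [0,T]: continuous, satisfying the ODE at all but
  finitely many times (the switching times of the piecewise continuous control).\<close>
definition master_solution ::
  "real \<Rightarrow> (nat \<Rightarrow> real) \<Rightarrow> (nat \<Rightarrow> real) \<Rightarrow> (nat \<Rightarrow> real) \<Rightarrow> mat4 \<Rightarrow> real \<Rightarrow> mat4
   \<Rightarrow> (real \<Rightarrow> real \<times> real \<times> real) \<Rightarrow> (real \<Rightarrow> mat4) \<Rightarrow> bool" where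
  "master_solution \<epsilon> \<omega> \<Lambda> \<Omega> V T \<rho>0 c \<rho> \<longleftrightarrow>
     continuous_on {0..T} \<rho> \<and> \<rho> 0 = \<rho>0 \<and>
     (\<exists>S. finite S \<and> (\<forall>t\<in>{0..T} - S.
        (\<rho> has_vector_derivative master_rhs \<epsilon> \<omega> \<Lambda> \<Omega> V (c t) (\<rho> t)) (at t within {0..T})))"

definition adjoint_solution ::
  "real \<Rightarrow> (nat \<Rightarrow> real) \<Rightarrow> (nat \<Rightarrow> real) \<Rightarrow> (nat \<Rightarrow> real) \<Rightarrow> mat4 \<Rightarrow> real \<Rightarrow> mat4
   \<Rightarrow> (real \<Rightarrow> real \<times> real \<times> real) \<Rightarrow> (real \<Rightarrow> mat4) \<Rightarrow> bool" where
  "adjoint_solution \<epsilon> \<omega> \<Lambda> \<Omega> V T \<rho>target c X \<longleftrightarrow>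
     continuous_on {0..T} X \<and> X T = \<rho>target \<and>
     (\<exists>S. finite S \<and> (\<forall>t\<in>{0..T} - S.
        (X has_vector_derivative adjoint_rhs \<epsilon> \<omega> \<Lambda> \<Omega> V (c t) (X t)) (at t within {0..T})))"

text \<open>J_1 evaluated on the state trajectory rho of control c: Tr(rho(T) rho_target)
  (real for Hermitian matrices; we take the real part).\<close>
definition J1 :: "real \<Rightarrow> mat4 \<Rightarrow> (real \<Rightarrow> mat4) \<Rightarrow> real" where
  "J1 T \<rho>target \<rho> = Re (trace (\<rho> T ** \<rho>target))"

definition K_u :: "mat4 \<Rightarrow> mat4 \<Rightarrow> mat4 \<Rightarrow> real" where
  "K_u V X \<rho> = Re (hs_inner X (csmul (-\<i>) (comm V \<rho>)))"

definition K_n :: "real \<Rightarrow> (nat \<Rightarrow> real) \<Rightarrow> (nat \<Rightarrow> real) \<Rightarrow> nat \<Rightarrow> mat4 \<Rightarrow> mat4 \<Rightarrow> real" where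
  "K_n \<epsilon> \<Lambda> \<Omega> j X \<rho> = Re (hs_inner X
      (csmul (-\<i> * \<epsilon> * \<Lambda> j) (comm (W j) \<rho>)
       + (\<epsilon> * \<Omega> j) *\<^sub>R (2 *\<^sub>R (sigma_m j ** \<rho> ** sigma_p j) + 2 *\<^sub>R (sigma_p j ** \<rho> ** sigma_m j) - 2 *\<^sub>R \<rho>)))"

definition K_c :: "real \<Rightarrow> (nat \<Rightarrow> real) \<Rightarrow> (nat \<Rightarrow> real) \<Rightarrow> mat4 \<Rightarrow> mat4 \<Rightarrow> mat4 \<Rightarrow> real \<times> real \<times> real" where
  "K_c \<epsilon> \<Lambda> \<Omega> V X \<rho> = (K_u V X \<rho>, K_n \<epsilon> \<Lambda> \<Omega> 1 X \<rho>, K_n \<epsilon> \<Lambda> \<Omega> 2 X \<rho>)"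

end

theory Submission imports Defs begin
lemma adj_adj[simp]: "adj (adj A) = A" by (simp add: adj_def vec_eq_iff)
lemma adj_add[simp]: "adj (A + B) = adj A + adj B" by (simp add: adj_def vec_eq_iff)
lemma adj_diff[simp]: "adj (A - B) = adj A - adj B" by (simp add: adj_def vec_eq_iff)
lemma sR[simp]: "((r *\<^sub>R A)::mat4) $ i $ j = complex_of_real r * A $ i $ j"
  by (simp add: scaleR_conv_of_real[where 'a=complex])
lemma cR[simp]: "r *\<^sub>R (z::complex) = of_real r * z" by (simp add: scaleR_conv_of_real)
lemma adj_scaleR[simp]: "adj (r *\<^sub>R A) = r *\<^sub>R adj A"
  by (simp add: adj_def vec_eq_iff)
lemma adj_csmul[simp]: "adj (csmul c A) = csmul (cnj c) (adj A)" by (simp add: adj_def csmul_def vec_eq_iff)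
lemma adj_mult[simp]: "adj (A ** B) = adj B ** adj A"
  by (simp add: adj_def vec_eq_iff matrix_matrix_mult_def mult.commute)
lemma UNIV2: "(UNIV::2 set) = {1,2}" 
  using exhaust_2 by auto
lemma sp1: "sigma_p j ** sigma_m j + sigma_m j ** sigma_p j = mat 1"
  by (auto simp: sigma_p_def sigma_m_def vec_eq_iff matrix_matrix_mult_def kron_def UNIV2 sigma_plus_def sigma_minus_def mat2_of_def I2_def mat_def
     UNIV_Times_UNIV[symmetric] sum.cartesian_product[symmetric] forall_2 prod_eq_iff)
lemma adj_sp[simp]: "adj (sigma_p j) = sigma_m j"
  by (auto simp: sigma_p_def sigma_m_def vec_eq_iff adj_def kron_def sigma_plus_def sigma_minus_def mat2_of_def I2_def mat_def
     forall_2 prod_eq_iff)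
lemma adj_sm[simp]: "adj (sigma_m j) = sigma_p j"
  by (metis adj_adj adj_sp)
lemma adj_W[simp]: "adj (W j) = W j"
  by (auto simp: W_def vec_eq_iff adj_def kron_def sigma_z_def mat2_of_def I2_def mat_def
     forall_2 prod_eq_iff)

lemma csmul_add: "csmul c (A + B) = csmul c A + csmul c B" by (simp add: csmul_def vec_eq_iff algebra_simps)
lemma csmul_diff: "csmul c (A - B) = csmul c A - csmul c B" by (simp add: csmul_def vec_eq_iff algebra_simps)
lemma csmul_scaleR: "csmul c (r *\<^sub>R A) = r *\<^sub>R csmul c A" by (simp add: csmul_def vec_eq_iff algebra_simps)
lemma csmul_ofreal: "csmul (c * of_real r) A = r *\<^sub>R csmul c A" by (simp add: csmul_def vec_eq_iff algebra_simps)
lemma mm_radd: "((A + B) ** C :: mat4) = A ** C + B ** C"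
  by (simp add: vec_eq_iff matrix_matrix_mult_def algebra_simps sum.distrib)
lemma mm_ladd: "(C ** (A + B) :: mat4) = C ** A + C ** B"
  by (simp add: vec_eq_iff matrix_matrix_mult_def algebra_simps sum.distrib)
lemma mm_lscale: "((r *\<^sub>R A) ** C :: mat4) = r *\<^sub>R (A ** C)"
  by (simp add: vec_eq_iff matrix_matrix_mult_def algebra_simps sum_distrib_left)
lemma mm_rscale: "(C ** (r *\<^sub>R A) :: mat4) = r *\<^sub>R (C ** A)"
  by (simp add: vec_eq_iff matrix_matrix_mult_def algebra_simps sum_distrib_left)
lemma mm_lcs: "((csmul c A) ** C :: mat4) = csmul c (A ** C)"
  by (simp add: vec_eq_iff matrix_matrix_mult_def csmul_def algebra_simps sum_distrib_left)
lemma mm_rcs: "(C ** (csmul c A) :: mat4) = csmul c (C ** A)"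
  by (simp add: vec_eq_iff matrix_matrix_mult_def csmul_def algebra_simps sum_distrib_left)
lemma mm_rdiff: "((A - B) ** C :: mat4) = A ** C - B ** C"
  by (simp add: vec_eq_iff matrix_matrix_mult_def algebra_simps sum_subtractf)
lemma mm_ldiff: "(C ** (A - B) :: mat4) = C ** A - C ** B"
  by (simp add: vec_eq_iff matrix_matrix_mult_def algebra_simps sum_subtractf)
lemma comm_add: "comm (A + B) C = comm A C + comm B C" by (simp add: comm_def mm_radd mm_ladd)
lemma comm_scaleR: "comm (r *\<^sub>R A) C = r *\<^sub>R comm A C" by (simp add: comm_def mm_lscale mm_rscale algebra_simps)
lemma acomm_sum: "acomm A C + acomm B C = acomm (A + B) C" by (simp add: acomm_def mm_radd mm_ladd)
lemma acomm_1: "acomm (mat 1) C = 2 *\<^sub>R C" by (simp add: acomm_def scaleR_2)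
lemma tr_scaleR: "trace (r *\<^sub>R A :: mat4) = of_real r * trace A" by (simp add: trace_def sum_distrib_left)
lemma tr_csmul: "trace (csmul c A :: mat4) = c * trace A" by (simp add: trace_def csmul_def sum_distrib_left)
lemma hs_add: "hs_inner X (A + B) = hs_inner X A + hs_inner X B" by (simp add: hs_inner_def mm_ladd trace_add)
lemma hs_diff: "hs_inner X (A - B) = hs_inner X A - hs_inner X B" by (simp add: hs_inner_def mm_ldiff trace_sub)
lemma hs_scaleR: "hs_inner X (r *\<^sub>R A) = of_real r * hs_inner X A" by (simp add: hs_inner_def mm_rscale tr_scaleR)
lemma hs_csmul: "hs_inner X (csmul c A) = c * hs_inner X A" by (simp add: hs_inner_def mm_rcs tr_csmul)
lemma hs_ladd: "hs_inner (A + B) X = hs_inner A X + hs_inner B X" by (simp add: hs_inner_def mm_radd trace_add)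
lemma hs_ldiff: "hs_inner (A - B) X = hs_inner A X - hs_inner B X" by (simp add: hs_inner_def mm_rdiff trace_sub)
lemma hs_lscaleR: "hs_inner (r *\<^sub>R A) X = of_real r * hs_inner A X" by (simp add: hs_inner_def mm_lscale tr_scaleR)
lemma hs_lcsmul: "hs_inner (csmul c A) X = cnj c * hs_inner A X" by (simp add: hs_inner_def mm_lcs tr_csmul)


lemma herm_Hc: "hermitian V \<Longrightarrow> adj (Hc \<epsilon> \<omega> \<Lambda> V c) = Hc \<epsilon> \<omega> \<Lambda> V c"
  by (cases c) (simp add: Hc_def H0_def hermitian_def)

lemma tr4: "trace ((A ** B) ** C :: mat4) = trace ((B ** C) ** A)"
  by (metis matrix_mul_assoc trace_mul_sym)

lemma hs_comm: assumes "adj H = H"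
  shows "hs_inner (csmul (-\<i>) (comm H X)) \<rho> = - hs_inner X (csmul (-\<i>) (comm H \<rho>))"
proof -
  have "trace ((H ** adj X) ** \<rho>) = trace (adj X ** (\<rho> ** H))"
    by (metis tr4 matrix_mul_assoc)
  then show ?thesis using assms
    apply (simp only: hs_lcsmul hs_csmul)
    apply (simp add: hs_inner_def comm_def mm_rdiff mm_ldiff trace_sub matrix_mul_assoc algebra_simps)
    done
qed

lemma hs_sand: "hs_inner (sigma_p j ** X ** sigma_m j) \<rho> = hs_inner X (sigma_m j ** \<rho> ** sigma_p j)"
  by (simp add: hs_inner_def) (metis matrix_mul_assoc trace_mul_sym)
lemma hs_sand2: "hs_inner (sigma_m j ** X ** sigma_p j) \<rho> = hs_inner X (sigma_p j ** \<rho> ** sigma_m j)"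
  by (simp add: hs_inner_def) (metis matrix_mul_assoc trace_mul_sym)
lemma hs_acomm: assumes "adj P = P" shows "hs_inner (acomm P X) \<rho> = hs_inner X (acomm P \<rho>)"
proof -
  have "trace (P ** adj X ** \<rho>) = trace (adj X ** (\<rho> ** P))"
    by (metis tr4 matrix_mul_assoc)
  then show ?thesis using assms
    by (simp add: hs_inner_def acomm_def mm_radd mm_ladd trace_add matrix_mul_assoc algebra_simps)
qed

lemma hs_LDj: "hs_inner (LD_adj_j \<Omega> j n X) \<rho> = hs_inner X (LD_j \<Omega> j n \<rho>)"
  by (simp add: LD_adj_j_def LD_j_def hs_ladd hs_ldiff hs_lscaleR hs_add hs_diff hs_scaleR hs_sand hs_sand2 hs_acomm)

lemma hs_LD: "hs_inner (LD_adj \<Omega> c X) \<rho> = hs_inner X (LD \<Omega> c \<rho>)"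
  by (cases c) (simp add: LD_adj_def LD_def hs_ladd hs_add hs_LDj)

lemma hs_adjoint: "hermitian V \<Longrightarrow>
   hs_inner (adjoint_rhs \<epsilon> \<omega> \<Lambda> \<Omega> V c X) \<rho> = - hs_inner X (master_rhs \<epsilon> \<omega> \<Lambda> \<Omega> V c \<rho>)"
  by (simp add: adjoint_rhs_def master_rhs_def hs_ldiff hs_lscaleR hs_comm herm_Hc hs_add hs_scaleR hs_LD)

lemma two_rho: "2 *\<^sub>R \<rho> = acomm (sigma_p j ** sigma_m j) \<rho> + acomm (sigma_m j ** sigma_p j) \<rho>"
  by (simp add: acomm_sum sp1 acomm_1)

lemma hs_master: "hs_inner X (master_rhs \<epsilon> \<omega> \<Lambda> \<Omega> V (u, n1, n2) \<rho>) =
   hs_inner X (master_rhs \<epsilon> \<omega> \<Lambda> \<Omega> V (0, 0, 0) \<rho>)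
   + of_real u * hs_inner X (csmul (-\<i>) (comm V \<rho>))
   + of_real n1 * hs_inner X (csmul (-\<i> * \<epsilon> * \<Lambda> 1) (comm (W 1) \<rho>)
       + (\<epsilon> * \<Omega> 1) *\<^sub>R (2 *\<^sub>R (sigma_m 1 ** \<rho> ** sigma_p 1) + 2 *\<^sub>R (sigma_p 1 ** \<rho> ** sigma_m 1) - 2 *\<^sub>R \<rho>))
   + of_real n2 * hs_inner X (csmul (-\<i> * \<epsilon> * \<Lambda> 2) (comm (W 2) \<rho>)
       + (\<epsilon> * \<Omega> 2) *\<^sub>R (2 *\<^sub>R (sigma_m 2 ** \<rho> ** sigma_p 2) + 2 *\<^sub>R (sigma_p 2 ** \<rho> ** sigma_m 2) - 2 *\<^sub>R \<rho>))"
  apply (subst (1) two_rho[of \<rho> 1])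
  apply (subst (1) two_rho[of \<rho> 2])
  apply (simp add: master_rhs_def Hc_def LD_def LD_j_def comm_add comm_scaleR csmul_add csmul_scaleR
     hs_add hs_diff hs_scaleR hs_csmul del: One_nat_def)
  apply (simp add: algebra_simps)
  done
lemma key: assumes "hermitian V"
  shows "Re (hs_inner (adjoint_rhs \<epsilon> \<omega> \<Lambda> \<Omega> V c X) \<rho> + hs_inner X (master_rhs \<epsilon> \<omega> \<Lambda> \<Omega> V d \<rho>))
     = K_c \<epsilon> \<Lambda> \<Omega> V X \<rho> \<bullet> (d - c)"
proof -
  obtain u n1 n2 where c: "c = (u, n1, n2)" by (cases c) auto
  obtain u' n1' n2' where d: "d = (u', n1', n2')" by (cases d) auto
  show ?thesis using assms
    apply (simp add: hs_adjoint c d)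
    apply (subst (1 2) hs_master)
    apply (simp add: K_c_def K_u_def K_n_def algebra_simps)
    done
qed

definition BB :: "mat4 \<Rightarrow> mat4 \<Rightarrow> real" where "BB A C = Re (hs_inner A C)"

lemma bb_BB: "bounded_bilinear BB"
proof -
  have "bilinear BB"
    unfolding bilinear_def
    by (auto simp: BB_def hs_add hs_ladd hs_scaleR hs_lscaleR intro!: linearI)
  then show ?thesis by (simp add: bilinear_conv_bounded_bilinear)
qed
lemma ftc:
  fixes f f' :: "real \<Rightarrow> real"
  assumes "finite S" "0 \<le> a" "a \<le> b" "b \<le> T" "continuous_on {0..T} f"
    and "\<forall>t\<in>{0..T}-S. (f has_vector_derivative f' t) (at t within {0..T})"
  shows "(f' has_integral (f b - f a)) {a..b}"
proof (rule fundamental_theorem_of_calculus_interior_strong[OF assms(1,3)])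
  fix x assume x: "x \<in> {a<..<b} - S"
  then have "x \<in> {0..T} - S" "0 < x" "x < T" using assms by auto
  then show "(f has_vector_derivative f' x) (at x)"
    using assms(6) at_within_Icc_at[of 0 x T] by metis
next
  show "continuous_on {a..b} f" using assms by (auto intro: continuous_on_subset)
qed

lemma BB_deriv:
  assumes "(X has_vector_derivative X') (at t within S)" "(\<rho> has_vector_derivative \<rho>') (at t within S)"
  shows "((\<lambda>t. BB (X t) (\<rho> t)) has_vector_derivative (BB (X t) \<rho>' + BB X' (\<rho> t))) (at t within S)"
  using bounded_bilinear.has_vector_derivative[OF bb_BB assms] .

lemma BB_cont: "continuous_on S X \<Longrightarrow> continuous_on S \<rho> \<Longrightarrow> continuous_on S (\<lambda>t. BB (X t) (\<rho> t))"
  using bounded_bilinear.continuous_on[OF bb_BB] by blast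

lemma BB_key: "hermitian V \<Longrightarrow> BB X (master_rhs \<epsilon> \<omega> \<Lambda> \<Omega> V d \<rho>) + BB (adjoint_rhs \<epsilon> \<omega> \<Lambda> \<Omega> V c X) \<rho>
     = K_c \<epsilon> \<Lambda> \<Omega> V X \<rho> \<bullet> (d - c)"
  using key[of V \<epsilon> \<omega> \<Lambda> \<Omega> c X \<rho> d] by (simp add: BB_def)
theorem proposition1:
  fixes \<epsilon> T \<mu> nmax :: real
    and \<omega> \<Lambda> \<Omega> :: "nat \<Rightarrow> real"
    and V \<rho>0 \<rho>target :: mat4
    and ck ck1 :: "real \<Rightarrow> real \<times> real \<times> real"
    and \<rho>k \<rho>k1 Xk :: "real \<Rightarrow> mat4"
  assumes params: "\<epsilon> > 0" "\<forall>j\<in>{1,2}. \<omega> j > 0 \<and> \<Lambda> j > 0 \<and> \<Omega> j > 0"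
      and T: "T > 0" and mu: "\<mu> > 0" and nmax: "nmax > 0"
      and V: "hermitian V"
      and rho0: "density_matrix \<rho>0" and target: "density_matrix \<rho>target"
      and adm_k: "admissible T \<mu> nmax ck"
      and sol_k: "master_solution \<epsilon> \<omega> \<Lambda> \<Omega> V T \<rho>0 ck \<rho>k"
      and adj_k: "adjoint_solution \<epsilon> \<omega> \<Lambda> \<Omega> V T \<rho>target ck Xk"
      and adm_k1: "admissible T \<mu> nmax ck1"
      and sol_k1: "master_solution \<epsilon> \<omega> \<Lambda> \<Omega> V T \<rho>0 ck1 \<rho>k1"
      and argmax_u: "\<forall>t\<in>{0..T}. is_arg_max (\<lambda>v. K_u V (Xk t) (\<rho>k1 t) * v)
                                  (\<lambda>v. \<bar>v\<bar> \<le> \<mu>) (fst (ck1 t))"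
      and argmax_n1: "\<forall>t\<in>{0..T}. is_arg_max (\<lambda>v. K_n \<epsilon> \<Lambda> \<Omega> 1 (Xk t) (\<rho>k1 t) * v)
                                  (\<lambda>v. v \<in> {0..nmax}) (fst (snd (ck1 t)))"
      and argmax_n2: "\<forall>t\<in>{0..T}. is_arg_max (\<lambda>v. K_n \<epsilon> \<Lambda> \<Omega> 2 (Xk t) (\<rho>k1 t) * v)
                                  (\<lambda>v. v \<in> {0..nmax}) (snd (snd (ck1 t)))"
  shows "(\<forall>t\<in>{0..T}. K_c \<epsilon> \<Lambda> \<Omega> V (Xk t) (\<rho>k1 t) \<bullet> (ck1 t - ck t) \<ge> 0)
       \<and> J1 T \<rho>target \<rho>k1 \<ge> J1 T \<rho>target \<rho>k
       \<and> ((emeasure lebesgue {t\<in>{0..T}. fst (ck1 t) \<noteq> fst (ck t)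
                                  \<and> K_u V (Xk t) (\<rho>k1 t) \<noteq> 0} > 0
           \<or> emeasure lebesgue {t\<in>{0..T}. fst (snd (ck1 t)) \<noteq> fst (snd (ck t))
                                  \<and> K_n \<epsilon> \<Lambda> \<Omega> 1 (Xk t) (\<rho>k1 t) \<noteq> 0} > 0
           \<or> emeasure lebesgue {t\<in>{0..T}. snd (snd (ck1 t)) \<noteq> snd (snd (ck t))
                                  \<and> K_n \<epsilon> \<Lambda> \<Omega> 2 (Xk t) (\<rho>k1 t) \<noteq> 0} > 0)
          \<longrightarrow> J1 T \<rho>target \<rho>k1 > J1 T \<rho>target \<rho>k)"
proof -
  define g where "g t = K_c \<epsilon> \<Lambda> \<Omega> V (Xk t) (\<rho>k1 t) \<bullet> (ck1 t - ck t)" for t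
  define F where "F t = BB (Xk t) (\<rho>k1 t)" for t
  define G where "G t = BB (Xk t) (\<rho>k t)" for t
  obtain S1 where S1: "finite S1" "\<forall>t\<in>{0..T} - S1.
        (\<rho>k1 has_vector_derivative master_rhs \<epsilon> \<omega> \<Lambda> \<Omega> V (ck1 t) (\<rho>k1 t)) (at t within {0..T})"
    and c1: "continuous_on {0..T} \<rho>k1" "\<rho>k1 0 = \<rho>0"
    using sol_k1 unfolding master_solution_def by blast
  obtain S3 where S3: "finite S3" "\<forall>t\<in>{0..T} - S3.
        (\<rho>k has_vector_derivative master_rhs \<epsilon> \<omega> \<Lambda> \<Omega> V (ck t) (\<rho>k t)) (at t within {0..T})"
    and c3: "continuous_on {0..T} \<rho>k" "\<rho>k 0 = \<rho>0"
    using sol_k unfolding master_solution_def by blast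
  obtain S2 where S2: "finite S2" "\<forall>t\<in>{0..T} - S2.
        (Xk has_vector_derivative adjoint_rhs \<epsilon> \<omega> \<Lambda> \<Omega> V (ck t) (Xk t)) (at t within {0..T})"
    and c2: "continuous_on {0..T} Xk" "Xk T = \<rho>target"
    using adj_k unfolding adjoint_solution_def by blast
  have Fd: "\<forall>t\<in>{0..T} - (S1 \<union> S2). (F has_vector_derivative g t) (at t within {0..T})"
  proof
    fix t assume t: "t \<in> {0..T} - (S1 \<union> S2)"
    have e: "BB (Xk t) (master_rhs \<epsilon> \<omega> \<Lambda> \<Omega> V (ck1 t) (\<rho>k1 t)) + BB (adjoint_rhs \<epsilon> \<omega> \<Lambda> \<Omega> V (ck t) (Xk t)) (\<rho>k1 t) = g t"
      unfolding g_def by (rule BB_key[OF V])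
    have d1: "(\<rho>k1 has_vector_derivative master_rhs \<epsilon> \<omega> \<Lambda> \<Omega> V (ck1 t) (\<rho>k1 t)) (at t within {0..T})"
      using S1(2) t by blast
    have d2: "(Xk has_vector_derivative adjoint_rhs \<epsilon> \<omega> \<Lambda> \<Omega> V (ck t) (Xk t)) (at t within {0..T})"
      using S2(2) t by blast
    show "(F has_vector_derivative g t) (at t within {0..T})"
      unfolding F_def using BB_deriv[OF d2 d1] unfolding e .
  qed
  have Gd: "\<forall>t\<in>{0..T} - (S3 \<union> S2). (G has_vector_derivative 0) (at t within {0..T})"
  proof
    fix t assume t: "t \<in> {0..T} - (S3 \<union> S2)"
    have e: "BB (Xk t) (master_rhs \<epsilon> \<omega> \<Lambda> \<Omega> V (ck t) (\<rho>k t)) + BB (adjoint_rhs \<epsilon> \<omega> \<Lambda> \<Omega> V (ck t) (Xk t)) (\<rho>k t) = 0"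
      using BB_key[OF V, where X="Xk t" and c="ck t" and d="ck t" and \<rho>="\<rho>k t"] by simp
    have d1: "(\<rho>k has_vector_derivative master_rhs \<epsilon> \<omega> \<Lambda> \<Omega> V (ck t) (\<rho>k t)) (at t within {0..T})"
      using S3(2) t by blast
    have d2: "(Xk has_vector_derivative adjoint_rhs \<epsilon> \<omega> \<Lambda> \<Omega> V (ck t) (Xk t)) (at t within {0..T})"
      using S2(2) t by blast
    show "(G has_vector_derivative 0) (at t within {0..T})"
      unfolding G_def using BB_deriv[OF d2 d1] unfolding e .
  qed
  have Fc: "continuous_on {0..T} F" unfolding F_def using BB_cont c1 c2 by blast
  have Gc: "continuous_on {0..T} G" unfolding G_def using BB_cont c3 c2 by blast
  have F0G0: "F 0 = G 0" by (simp add: F_def G_def c1 c3)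
  have "((\<lambda>t. 0) has_integral (G T - G 0)) {0..T}"
    using ftc[OF _ _ _ _ Gc Gd] S2 S3 T by auto
  then have GT: "G T = G 0" by simp
  have herm: "adj \<rho>target = \<rho>target" using target by (simp add: density_matrix_def psd_def hermitian_def)
  have JF: "J1 T \<rho>target \<rho>k1 = F T"
    using trace_mul_sym[of "\<rho>k1 T" \<rho>target] by (simp add: J1_def F_def BB_def hs_inner_def c2 herm)
  have JG: "J1 T \<rho>target \<rho>k = G T"
    using trace_mul_sym[of "\<rho>k T" \<rho>target] by (simp add: J1_def G_def BB_def hs_inner_def c2 herm)
  have pw: "K_u V (Xk t) (\<rho>k1 t) * (fst (ck1 t) - fst (ck t)) \<ge> 0
      \<and> K_n \<epsilon> \<Lambda> \<Omega> 1 (Xk t) (\<rho>k1 t) * (fst (snd (ck1 t)) - fst (snd (ck t))) \<ge> 0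
      \<and> K_n \<epsilon> \<Lambda> \<Omega> 2 (Xk t) (\<rho>k1 t) * (snd (snd (ck1 t)) - snd (snd (ck t))) \<ge> 0"
    if t: "t \<in> {0..T}" for t
  proof -
    have ct: "ck t \<in> control_set \<mu> nmax" using adm_k t unfolding admissible_def by blast
    then have "\<bar>fst (ck t)\<bar> \<le> \<mu> \<and> fst (snd (ck t)) \<in> {0..nmax} \<and> snd (snd (ck t)) \<in> {0..nmax}"
      by (cases "ck t") (auto simp: control_set_def)
    then have a: "\<bar>fst (ck t)\<bar> \<le> \<mu>" and b: "fst (snd (ck t)) \<in> {0..nmax}" and c: "snd (snd (ck t)) \<in> {0..nmax}"
      by auto
    have "\<not> K_u V (Xk t) (\<rho>k1 t) * fst (ck t) > K_u V (Xk t) (\<rho>k1 t) * fst (ck1 t)"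
      using argmax_u[rule_format, OF t] a unfolding is_arg_max_def by blast
    moreover have "\<not> K_n \<epsilon> \<Lambda> \<Omega> 1 (Xk t) (\<rho>k1 t) * fst (snd (ck t)) > K_n \<epsilon> \<Lambda> \<Omega> 1 (Xk t) (\<rho>k1 t) * fst (snd (ck1 t))"
      using argmax_n1[rule_format, OF t] b unfolding is_arg_max_def by blast
    moreover have "\<not> K_n \<epsilon> \<Lambda> \<Omega> 2 (Xk t) (\<rho>k1 t) * snd (snd (ck t)) > K_n \<epsilon> \<Lambda> \<Omega> 2 (Xk t) (\<rho>k1 t) * snd (snd (ck1 t))"
      using argmax_n2[rule_format, OF t] c unfolding is_arg_max_def by blast
    ultimately show ?thesis by (simp add: right_diff_distrib)
  qed
  have gdef: "g t = K_u V (Xk t) (\<rho>k1 t) * (fst (ck1 t) - fst (ck t))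
      + (K_n \<epsilon> \<Lambda> \<Omega> 1 (Xk t) (\<rho>k1 t) * (fst (snd (ck1 t)) - fst (snd (ck t)))
      + K_n \<epsilon> \<Lambda> \<Omega> 2 (Xk t) (\<rho>k1 t) * (snd (snd (ck1 t)) - snd (snd (ck t))))" for t
    unfolding g_def K_c_def by (cases "ck1 t"; cases "ck t") auto
  have g0: "g t \<ge> 0" if "t \<in> {0..T}" for t
    using pw[OF that] unfolding gdef by linarith
  have P1: "\<forall>t\<in>{0..T}. K_c \<epsilon> \<Lambda> \<Omega> V (Xk t) (\<rho>k1 t) \<bullet> (ck1 t - ck t) \<ge> 0"
    using g0 unfolding g_def by blast
  have Fint: "(g has_integral (F b - F a)) {a..b}" if "0 \<le> a" "a \<le> b" "b \<le> T" for a b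
    using ftc[OF _ that Fc Fd] S1 S2 by auto
  have FT: "F T \<ge> F 0"
    using has_integral_nonneg[OF Fint[of 0 T]] g0 T by auto
  have P3: "J1 T \<rho>target \<rho>k1 > J1 T \<rho>target \<rho>k" if pos: "emeasure lebesgue {t\<in>{0..T}. fst (ck1 t) \<noteq> fst (ck t)
                                  \<and> K_u V (Xk t) (\<rho>k1 t) \<noteq> 0} > 0
           \<or> emeasure lebesgue {t\<in>{0..T}. fst (snd (ck1 t)) \<noteq> fst (snd (ck t))
                                  \<and> K_n \<epsilon> \<Lambda> \<Omega> 1 (Xk t) (\<rho>k1 t) \<noteq> 0} > 0
           \<or> emeasure lebesgue {t\<in>{0..T}. snd (snd (ck1 t)) \<noteq> snd (snd (ck t))
                                  \<and> K_n \<epsilon> \<Lambda> \<Omega> 2 (Xk t) (\<rho>k1 t) \<noteq> 0} > 0"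
  proof (rule ccontr)
    assume "\<not> ?thesis"
    then have eq: "F T = F 0" using FT JF JG GT F0G0 by linarith
    have Fconst: "F t = F 0" if t: "t \<in> {0..T}" for t
    proof -
      have "F t - F 0 \<ge> 0" using has_integral_nonneg[OF Fint[of 0 t]] g0 t by auto
      moreover have "F T - F t \<ge> 0" using has_integral_nonneg[OF Fint[of t T]] g0 t by auto
      ultimately show ?thesis using eq by linarith
    qed
    have gz: "g t = 0" if t: "t \<in> {0..T} - (S1 \<union> S2)" for t
    proof -
      have t0: "t \<in> {0..T}" using t by blast
      have d0: "(F has_vector_derivative 0) (at t within {0..T})"
        by (rule has_vector_derivative_transform[where f="\<lambda>_. F 0", OF t0]) (auto intro: Fconst)
      have dg: "(F has_vector_derivative g t) (at t within {0..T})" using Fd t by blast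
      have tc: "t \<in> cbox 0 T" using t0 by (simp add: cbox_interval)
      show ?thesis
        using vector_derivative_unique_within_closed_interval[OF T tc, unfolded cbox_interval, OF dg d0] .
    qed
    have fin: "finite {t\<in>{0..T}. g t \<noteq> 0}"
      by (rule finite_subset[of _ "S1 \<union> S2"]) (use gz S1 S2 in auto)
    have null: "emeasure lebesgue A = 0" if "A \<subseteq> {t\<in>{0..T}. g t \<noteq> 0}" for A
    proof -
      have "finite A" using fin that finite_subset by blast
      then have "A \<in> null_sets lborel" by (rule finite_imp_null_set_lborel)
      then have "A \<in> null_sets lebesgue" by (rule null_sets_completionI)
      then show ?thesis by (rule null_setsD1)
    qed
    have s1: "{t\<in>{0..T}. fst (ck1 t) \<noteq> fst (ck t) \<and> K_u V (Xk t) (\<rho>k1 t) \<noteq> 0} \<subseteq> {t\<in>{0..T}. g t \<noteq> 0}"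
    proof safe
      fix t assume t: "t \<in> {0..T}" "fst (ck1 t) \<noteq> fst (ck t)" "K_u V (Xk t) (\<rho>k1 t) \<noteq> 0" "g t = 0"
      then have "K_u V (Xk t) (\<rho>k1 t) * (fst (ck1 t) - fst (ck t)) \<noteq> 0" by simp
      then show False using pw[OF t(1)] t(4) unfolding gdef by linarith
    qed
    have s2: "{t\<in>{0..T}. fst (snd (ck1 t)) \<noteq> fst (snd (ck t)) \<and> K_n \<epsilon> \<Lambda> \<Omega> 1 (Xk t) (\<rho>k1 t) \<noteq> 0} \<subseteq> {t\<in>{0..T}. g t \<noteq> 0}"
    proof safe
      fix t assume t: "t \<in> {0..T}" "fst (snd (ck1 t)) \<noteq> fst (snd (ck t))" "K_n \<epsilon> \<Lambda> \<Omega> 1 (Xk t) (\<rho>k1 t) \<noteq> 0" "g t = 0"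
      then have "K_n \<epsilon> \<Lambda> \<Omega> 1 (Xk t) (\<rho>k1 t) * (fst (snd (ck1 t)) - fst (snd (ck t))) \<noteq> 0" by simp
      then show False using pw[OF t(1)] t(4) unfolding gdef by linarith
    qed
    have s3: "{t\<in>{0..T}. snd (snd (ck1 t)) \<noteq> snd (snd (ck t)) \<and> K_n \<epsilon> \<Lambda> \<Omega> 2 (Xk t) (\<rho>k1 t) \<noteq> 0} \<subseteq> {t\<in>{0..T}. g t \<noteq> 0}"
    proof safe
      fix t assume t: "t \<in> {0..T}" "snd (snd (ck1 t)) \<noteq> snd (snd (ck t))" "K_n \<epsilon> \<Lambda> \<Omega> 2 (Xk t) (\<rho>k1 t) \<noteq> 0" "g t = 0"
      then have "K_n \<epsilon> \<Lambda> \<Omega> 2 (Xk t) (\<rho>k1 t) * (snd (snd (ck1 t)) - snd (snd (ck t))) \<noteq> 0" by simp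
      then show False using pw[OF t(1)] t(4) unfolding gdef by linarith
    qed
    show False using pos null[OF s1] null[OF s2] null[OF s3] by auto
  qed
  have P2: "J1 T \<rho>target \<rho>k1 \<ge> J1 T \<rho>target \<rho>k" using FT JF JG GT F0G0 by linarith
  show ?thesis using P1 P2 P3 by blast
qed

end
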